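(* Let $\Sigma$ be a set containing $0$, $(\Gamma,\oplus)$ an abelian group, and $f:\Sigma^n\to\Gamma$. If $f$ has both $K$-separable and $L$-separable arguments for partitions $K=\{K_1,\ldots,K_k\}$ and $L=\{L_1,\ldots,L_l\}$ of $[n]$, then $f$ has $(K\wedge L)$-separable arguments, where $K\wedge L=\{K_i\cap L_j: i\in[k],\,j\in[l]\}\setminus\{\emptyset\}$.
   Context: $[n]=\{1,\ldots,n\}$; for $M=\{i_1<\cdots<i_m\}\subseteq[n]$ and $\bar x=(x_1,\ldots,x_n)$, $\bar x_M=(x_{i_1},\ldots,x_{i_m})$. A function $f:\Sigma^n\to\Gamma$ has $K$-separable arguments (for a partition $K=\{K_1,\ldots,K_k\}$ of $[n]$ into nonempty sets) if there exist functions $f_j:\Sigma^{|K_j|}\to\Gamma$ with $f(\bar x)=f_1(\bar x_{K_1})\oplus\cdots\oplus f_k(\bar x_{K_k})$ for all $\bar x$. *)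

theory Defs
  imports Main "HOL-Library.Disjoint_Sets"
begin

text \<open>Tuples in Sigma^n are lists of length n with entries in S; positions are
  numbered 1..n as in the paper, so [n] = {1..n}.\<close>

definition sub :: "'a list \<Rightarrow> nat set \<Rightarrow> 'a list" where
  "sub xs M = nths xs ((\<lambda>i. i - 1) ` M)"

definition separable ::
  "'a set \<Rightarrow> nat \<Rightarrow> ('a list \<Rightarrow> 'b::ab_group_add) \<Rightarrow> nat set set \<Rightarrow> bool" where
  "separable S n f K \<longleftrightarrow>
     (\<exists>g :: nat set \<Rightarrow> 'a list \<Rightarrow> 'b.
        \<forall>xs. length xs = n \<and> set xs \<subseteq> S \<longrightarrow> f xs = (\<Sum>B\<in>K. g B (sub xs B)))"

definition meet :: "nat set set \<Rightarrow> nat set set \<Rightarrow> nat set set" where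
  "meet K L = {A \<inter> B | A B. A \<in> K \<and> B \<in> L} - {{}}"

end

theory Submission
  imports Defs
begin

lemma nths_eq_nth:
  "length xs = length ys \<Longrightarrow> nths xs I = nths ys I \<Longrightarrow> i < length xs \<Longrightarrow> i \<in> I \<Longrightarrow> xs!i = ys!i"
proof (induction xs ys arbitrary: I i rule: list_induct2)
  case Nil then show ?case by simp
next
  case (Cons x xs y ys)
  show ?case
  proof (cases i)
    case 0 then show ?thesis using Cons.prems by (simp add: nths_Cons)
  next
    case (Suc j)
    have "nths xs {j. Suc j \<in> I} = nths ys {j. Suc j \<in> I}"
      using Cons.prems Cons.hyps by (auto simp: nths_Cons split: if_splits)
    then show ?thesis using Cons Suc by simp
  qed
qed

lemma nths_cong:
  "length xs = length ys \<Longrightarrow> (\<And>i. i < length xs \<Longrightarrow> i \<in> I \<Longrightarrow> xs!i = ys!i) \<Longrightarrow> nths xs I = nths ys I"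
proof (induction xs ys arbitrary: I rule: list_induct2)
  case Nil then show ?case by simp
next
  case (Cons x xs y ys)
  have "nths xs {j. Suc j \<in> I} = nths ys {j. Suc j \<in> I}"
    using Cons.prems by (intro Cons.IH) force
  moreover have "0 \<in> I \<Longrightarrow> x = y" using Cons.prems[of 0] by simp
  ultimately show ?case by (simp add: nths_Cons)
qed

lemma sub_eq_nth:
  "length xs = length ys \<Longrightarrow> sub xs M = sub ys M \<Longrightarrow> i < length xs \<Longrightarrow> Suc i \<in> M \<Longrightarrow> xs!i = ys!i"
  unfolding sub_def by (erule nths_eq_nth) (auto intro: image_eqI[where x="Suc i"])

lemma sub_cong:
  "0 \<notin> M \<Longrightarrow> length xs = length ys \<Longrightarrow> (\<And>i. i < length xs \<Longrightarrow> Suc i \<in> M \<Longrightarrow> xs!i = ys!i) \<Longrightarrow> sub xs M = sub ys M"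
  unfolding sub_def
  apply (rule nths_cong, assumption)
  subgoal for i
    apply (erule imageE)
    subgoal for j by (cases j) auto
    done
  done

definition z :: "nat set \<Rightarrow> 'a::zero list \<Rightarrow> 'a list" where
  "z M xs = map (\<lambda>i. if Suc i \<in> M then xs!i else 0) [0..<length xs]"

lemma length_z[simp]: "length (z M xs) = length xs" by (simp add: z_def)
lemma nth_z[simp]: "i < length xs \<Longrightarrow> z M xs ! i = (if Suc i \<in> M then xs!i else 0)"
  by (simp add: z_def)
lemma set_z: "0 \<in> S \<Longrightarrow> set xs \<subseteq> S \<Longrightarrow> set (z M xs) \<subseteq> S"
  by (auto simp: z_def)

definition dep :: "nat \<Rightarrow> nat set \<Rightarrow> ('a list \<Rightarrow> 'b) \<Rightarrow> bool" where
  "dep n M F \<longleftrightarrow> (\<forall>xs ys. length xs = n \<longrightarrow> length ys = n \<longrightarrow>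
      (\<forall>i<n. Suc i \<in> M \<longrightarrow> xs!i = ys!i) \<longrightarrow> F xs = F ys)"

lemma dep_sub:
  assumes "dep n M F" "length xs = n"
  shows "F xs = F (SOME ys. length ys = n \<and> sub ys M = sub xs M)"
proof -
  let ?ys = "SOME ys. length ys = n \<and> sub ys M = sub xs M"
  have "length ?ys = n \<and> sub ?ys M = sub xs M"
    by (rule someI[of _ xs]) (use assms in auto)
  then have l: "length ?ys = n" and e: "sub xs M = sub ?ys M" by auto
  have "\<forall>i<n. Suc i \<in> M \<longrightarrow> xs!i = ?ys!i"
    using sub_eq_nth[OF _ e] l assms(2) by auto
  then show ?thesis using assms l unfolding dep_def by blast
qed

theorem lemmaA3:
  fixes S :: "'a::zero set" and n :: nat and f :: "'a list \<Rightarrow> 'b::ab_group_add"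
    and K L :: "nat set set"
  assumes "0 \<in> S"
    and "partition_on {1..n} K" and "partition_on {1..n} L"
    and "separable S n f K" and "separable S n f L"
  shows "separable S n f (meet K L)"
proof -
  note S0 = assms(1) and pK = assms(2) and pL = assms(3)
  obtain g where g: "\<And>xs. length xs = n \<Longrightarrow> set xs \<subseteq> S \<Longrightarrow> f xs = (\<Sum>A\<in>K. g A (sub xs A))"
    using assms(4) unfolding separable_def by blast
  obtain h where h: "\<And>xs. length xs = n \<Longrightarrow> set xs \<subseteq> S \<Longrightarrow> f xs = (\<Sum>B\<in>L. h B (sub xs B))"
    using assms(5) unfolding separable_def by blast
  have Ksub: "A \<subseteq> {1..n}" if "A \<in> K" for A using partition_onD1[OF pK] that by blast
  have Lsub: "B \<subseteq> {1..n}" if "B \<in> L" for B using partition_onD1[OF pL] that by blast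
  have finK: "finite K" using Ksub by (intro finite_subset[of K "Pow {1..n}"]) auto
  have finL: "finite L" using Lsub by (intro finite_subset[of L "Pow {1..n}"]) auto
  have K0: "0 \<notin> A" if "A \<in> K" for A using Ksub[OF that] by auto
  have L0: "0 \<notin> B" if "B \<in> L" for B using Lsub[OF that] by auto
  have dK: "A \<inter> A' = {}" if "A \<in> K" "A' \<in> K" "A \<noteq> A'" for A A'
    using disjointD[OF partition_onD2[OF pK]] that by blast
  have dL: "B \<inter> B' = {}" if "B \<in> L" "B' \<in> L" "B \<noteq> B'" for B B'
    using disjointD[OF partition_onD2[OF pL]] that by blast
  show ?thesis
  proof (cases "meet K L = {}")
    case True
    have "K = {}"
    proof (rule ccontr)
      assume "K \<noteq> {}"
      then obtain A where A: "A \<in> K" by blast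
      then obtain x where x: "x \<in> A" using partition_onD3[OF pK] by (metis all_not_in_conv)
      then have "x \<in> {1..n}" using Ksub[OF A] by blast
      then have "x \<in> \<Union>L" by (simp add: partition_onD1[OF pL, symmetric])
      then obtain B where "B \<in> L" "x \<in> B" by blast
      then have "A \<inter> B \<in> meet K L" using A x unfolding meet_def by blast
      then show False using True by blast
    qed
    then have "f xs = 0" if "length xs = n" "set xs \<subseteq> S" for xs using g[OF that] by simp
    then show ?thesis unfolding separable_def True by simp
  next
    case False
    then obtain M0 where M0: "M0 \<in> meet K L" by blast
    define zs :: "'a list" where "zs = replicate n 0"
    define \<phi> where "\<phi> p xs = h (snd p) (sub (z (fst p) xs) (snd p))" for p and xs :: "'a list"
    define c where "c A = (\<Sum>A'\<in>K-{A}. g A' (sub zs A'))" for A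
    define P where "P = {p\<in>K\<times>L. fst p \<inter> snd p \<noteq> {}}"
    define Q where "Q = {p\<in>K\<times>L. fst p \<inter> snd p = {}}"
    define u where "u p = fst p \<inter> snd p" for p :: "nat set \<times> nat set"
    define pr where "pr = the_inv_into P u"
    define D where "D = (\<Sum>p\<in>Q. \<phi> p zs) - (\<Sum>A\<in>K. c A)"
    define \<Phi> where "\<Phi> M xs = \<phi> (pr M) xs + (if M = M0 then D else 0)" for M xs
    have zsv: "length zs = n" "set zs \<subseteq> S" using S0 by (auto simp: zs_def)
    have step1: "g A (sub xs A) = (\<Sum>B\<in>L. \<phi> (A,B) xs) - c A"
      if xs: "length xs = n" "set xs \<subseteq> S" and A: "A \<in> K" for xs A
    proof -
      have v: "length (z A xs) = n" "set (z A xs) \<subseteq> S" using xs set_z[OF S0] by auto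
      have "f (z A xs) = (\<Sum>A'\<in>K. g A' (sub (z A xs) A'))" using g[OF v] .
      also have "\<dots> = g A (sub (z A xs) A) + (\<Sum>A'\<in>K-{A}. g A' (sub (z A xs) A'))"
        using finK A by (simp add: sum.remove)
      also have "sub (z A xs) A = sub xs A"
        by (rule sub_cong[OF K0[OF A]]) auto
      also have "(\<Sum>A'\<in>K-{A}. g A' (sub (z A xs) A')) = c A"
        unfolding c_def
      proof (rule sum.cong[OF refl])
        fix A' assume A': "A' \<in> K - {A}"
        have "sub (z A xs) A' = sub zs A'"
        proof (rule sub_cong[OF K0])
          show "A' \<in> K" using A' by blast
          show "length (z A xs) = length zs" using xs zsv by simp
          fix i assume i: "i < length (z A xs)" "Suc i \<in> A'"
          have "Suc i \<notin> A" using dK[OF A, of A'] A' i by blast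
          then show "z A xs ! i = zs ! i" using i xs by (simp add: zs_def)
        qed
        then show "g A' (sub (z A xs) A') = g A' (sub zs A')" by simp
      qed
      finally have e1: "f (z A xs) = g A (sub xs A) + c A" .
      have "f (z A xs) = (\<Sum>B\<in>L. \<phi> (A,B) xs)" using h[OF v] by (simp add: \<phi>_def)
      then show ?thesis using e1 by (simp add: algebra_simps)
    qed
    have injP: "inj_on u P"
    proof (rule inj_onI)
      fix p q assume p: "p \<in> P" and q: "q \<in> P" and e: "u p = u q"
      obtain x where x: "x \<in> u p" using p unfolding P_def u_def by blast
      have x1: "x \<in> fst p" "x \<in> snd p" using x unfolding u_def by auto
      have x2: "x \<in> fst q" "x \<in> snd q" using x e unfolding u_def by auto
      have m: "fst p \<in> K" "fst q \<in> K" "snd p \<in> L" "snd q \<in> L" using p q unfolding P_def by auto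
      have "fst p = fst q"
      proof (rule ccontr)
        assume "fst p \<noteq> fst q"
        then have "fst p \<inter> fst q = {}" using dK m by blast
        then show False using x1 x2 by blast
      qed
      moreover have "snd p = snd q"
      proof (rule ccontr)
        assume "snd p \<noteq> snd q"
        then have "snd p \<inter> snd q = {}" using dL m by blast
        then show False using x1 x2 by blast
      qed
      ultimately show "p = q" by (simp add: prod_eq_iff)
    qed
    have imP: "u ` P = meet K L"
      unfolding P_def u_def meet_def
    proof (intro equalityI subsetI)
      fix M assume "M \<in> (\<lambda>p. fst p \<inter> snd p) ` {p \<in> K \<times> L. fst p \<inter> snd p \<noteq> {}}"
      then obtain p where p: "p \<in> K \<times> L" "fst p \<inter> snd p \<noteq> {}" "M = fst p \<inter> snd p" by blast
      have "fst p \<in> K" "snd p \<in> L" using p(1) by (auto simp: mem_Times_iff)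
      then show "M \<in> {A \<inter> B |A B. A \<in> K \<and> B \<in> L} - {{}}" using p by blast
    next
      fix M assume "M \<in> {A \<inter> B |A B. A \<in> K \<and> B \<in> L} - {{}}"
      then obtain A B where "A \<in> K" "B \<in> L" "A \<inter> B \<noteq> {}" "M = A \<inter> B" by auto
      then show "M \<in> (\<lambda>p. fst p \<inter> snd p) ` {p \<in> K \<times> L. fst p \<inter> snd p \<noteq> {}}"
        by (intro image_eqI[of _ _ "(A,B)"]) auto
    qed
    have finKL: "finite (K \<times> L)" using finK finL by simp
    have KLPQ: "K \<times> L = P \<union> Q" "P \<inter> Q = {}" unfolding P_def Q_def by auto
    have finP: "finite P" "finite Q" using finKL KLPQ by (metis finite_Un)+
    have finM: "finite (meet K L)" using imP finP(1) by (metis finite_imageI)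
    have Qconst: "\<phi> p xs = \<phi> p zs" if "p \<in> Q" "length xs = n" for p xs
      unfolding \<phi>_def
    proof (rule arg_cong[where f="h (snd p)"], rule sub_cong)
      show "0 \<notin> snd p" using that L0 unfolding Q_def by auto
      show "length (z (fst p) xs) = length (z (fst p) zs)" using that zsv by simp
      fix i assume i: "i < length (z (fst p) xs)" "Suc i \<in> snd p"
      then have "Suc i \<notin> fst p" using that(1) unfolding Q_def by blast
      then show "z (fst p) xs ! i = z (fst p) zs ! i" using i that zsv by simp
    qed
    have main: "f xs = (\<Sum>M\<in>meet K L. \<Phi> M xs)" if xs: "length xs = n" "set xs \<subseteq> S" for xs
    proof -
      have "f xs = (\<Sum>A\<in>K. (\<Sum>B\<in>L. \<phi> (A,B) xs) - c A)"
        using g[OF xs] step1[OF xs] by simp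
      also have "\<dots> = (\<Sum>p\<in>K\<times>L. \<phi> p xs) - (\<Sum>A\<in>K. c A)"
        by (simp add: sum_subtractf sum.cartesian_product)
      also have "(\<Sum>p\<in>K\<times>L. \<phi> p xs) = (\<Sum>p\<in>P. \<phi> p xs) + (\<Sum>p\<in>Q. \<phi> p zs)"
        using KLPQ finP Qconst[OF _ xs(1)] by (simp add: sum.union_disjoint)
      also have "(\<Sum>p\<in>P. \<phi> p xs) = (\<Sum>M\<in>meet K L. \<phi> (pr M) xs)"
        unfolding imP[symmetric] using injP
        by (simp add: sum.reindex pr_def the_inv_into_f_f)
      finally have "f xs = (\<Sum>M\<in>meet K L. \<phi> (pr M) xs) + D"
        by (simp add: D_def algebra_simps)
      moreover have "(\<Sum>M\<in>meet K L. \<Phi> M xs) = (\<Sum>M\<in>meet K L. \<phi> (pr M) xs) + D"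
        unfolding \<Phi>_def using M0 finM by (simp add: sum.distrib)
      ultimately show ?thesis by simp
    qed
    have depM: "dep n M (\<Phi> M)" if M: "M \<in> meet K L" for M
    proof -
      have prP: "pr M \<in> P" using M injP imP unfolding pr_def by (metis the_inv_into_into subset_refl)
      have uM: "u (pr M) = M" using M injP imP unfolding pr_def by (metis f_the_inv_into_f)
      show ?thesis unfolding dep_def
      proof (intro allI impI)
        fix xs ys :: "'a list"
        assume l: "length xs = n" "length ys = n" and agree: "\<forall>i<n. Suc i \<in> M \<longrightarrow> xs!i = ys!i"
        have "sub (z (fst (pr M)) xs) (snd (pr M)) = sub (z (fst (pr M)) ys) (snd (pr M))"
        proof (rule sub_cong)
          show "0 \<notin> snd (pr M)" using prP L0 unfolding P_def by auto
          show "length (z (fst (pr M)) xs) = length (z (fst (pr M)) ys)" using l by simp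
          fix i assume i: "i < length (z (fst (pr M)) xs)" "Suc i \<in> snd (pr M)"
          show "z (fst (pr M)) xs ! i = z (fst (pr M)) ys ! i"
            using i l agree uM unfolding u_def by auto
        qed
        then show "\<Phi> M xs = \<Phi> M ys" unfolding \<Phi>_def \<phi>_def by simp
      qed
    qed
    define G where "G M ys = \<Phi> M (SOME xs. length xs = n \<and> sub xs M = ys)" for M ys
    show ?thesis unfolding separable_def
    proof (intro exI[of _ G] allI impI)
      fix xs assume xs: "length xs = n \<and> set xs \<subseteq> S"
      have "f xs = (\<Sum>M\<in>meet K L. \<Phi> M xs)" using main xs by blast
      also have "\<dots> = (\<Sum>M\<in>meet K L. G M (sub xs M))"
        unfolding G_def using xs by (intro sum.cong refl dep_sub depM) auto
      finally show "f xs = (\<Sum>M\<in>meet K L. G M (sub xs M))" .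
    qed
  qed
qed

end
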